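(* Let $G=(V,E)$ be a finite undirected graph, let $k>2$ be an integer, let $m=\lfloor k/2\rfloor$, let $C$ be a legitimate configuration (as defined in the context), and let $s\in S(C)$. Let $u\in V$ with $\mathrm{dist}(u,s)\le m-1$. Then every shortest path $(s=s_0,s_1,\dots,s_{d_u}=u)$ from $s$ to $u$ satisfies the following in $C$: for every clock index $i\in\{d_u+1,\dots,m-1\}$ there exists an integer $a\in\{0,\dots,d_u\}$ such that 1. for all $\ell\in\{0,\dots,a\}$, $(b_{i,s_\ell},c_{i,s_\ell})=(\downarrow,c_{i,s})$; 2. there exists $c'\in\{c_{i,s}-1,c_{i,s}\}$ such that for all $\ell\in\{a+1,\dots,d_u\}$, $(b_{i,s_\ell},c_{i,s_\ell})=(\uparrow,c')$.
   Context: $\mathrm{dist}$ is the graph distance in $G$ and $N(u)$ the neighbourhood of $u$. A configuration $C$ assigns to each node $u$ the values $d_u\in\{0,\dots,k-1\}$, $err_u\in\{0,1\}$, and for each $i\in\{1,\dots,m-1\}$ a clock value $c_{i,u}\in\mathbb{Z}/4\mathbb{Z}$ and an arrow $b_{i,u}\in\{\uparrow,\downarrow\}$. Let $S(C)=\{u\in V: d_u=0\}$. Clock arithmetic is in $\mathbb{Z}/4\mathbb{Z}$. Predicates on a node $u$: - $\mathrm{well\_defined}(u)$: $err_u=0$, $|d_u-d_v|\le 1$ for all $v\in N(u)$, and if $d_u>0$ then some $v\in N(u)$ has $d_v=d_u-1$. - $\mathrm{leader\_down}(u)$: if $d_u=0$ then $b_{i,u}=\downarrow$ for all $i\in\{1,\dots,m-1\}$.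 - $\mathrm{bc\_up}(u,i)$: for every $v\in N(u)$ with $d_v=d_u-1$, $(b_{i,u},b_{i,v},c_{i,v})\in\{(\uparrow,\uparrow,c_{i,u}),(\uparrow,\downarrow,c_{i,u}),(\uparrow,\downarrow,c_{i,u}+1),(\downarrow,\downarrow,c_{i,u})\}$. - $\mathrm{bc\_down}(u,i)$: for every $v\in N(u)$ with $d_v=d_u+1$, $(b_{i,u},b_{i,v},c_{i,v})\in\{(\uparrow,\uparrow,c_{i,u}),(\downarrow,\uparrow,c_{i,u}),(\downarrow,\uparrow,c_{i,u}-1),(\downarrow,\downarrow,c_{i,u})\}$. - $\mathrm{branch\_coherence}(u)$: either $d_u\ge m$, or ($\mathrm{bc\_up}(u,d_u)$ holds, and $\mathrm{bc\_up}(u,i)$ and $\mathrm{bc\_down}(u,i)$ hold for all $i\in\{d_u+1,\dots,m-1\}$). (For $d_u=0$ the condition $\mathrm{bc\_up}(u,0)$ is vacuous.) A configuration $C$ is legitimate if every node $u$ satisfies $\mathrm{well\_defined}(u)$, $\mathrm{leader\_down}(u)$ and $\mathrm{branch\_coherence}(u)$, and any two distinct nodes of $S(C)$ are at distance at least $k$ in $G$. *)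

theory Defs
  imports Main "HOL-Library.Extended_Nat" "HOL-Library.Numeral_Type"
begin

definition undirected_graph :: "'v set \<Rightarrow> ('v \<Rightarrow> 'v \<Rightarrow> bool) \<Rightarrow> bool" where
  "undirected_graph V E \<longleftrightarrow> finite V \<and> (\<forall>u v. E u v \<longrightarrow> u \<in> V \<and> v \<in> V)
     \<and> (\<forall>u v. E u v \<longrightarrow> E v u) \<and> (\<forall>u. \<not> E u u)"

definition nbhd :: "'v set \<Rightarrow> ('v \<Rightarrow> 'v \<Rightarrow> bool) \<Rightarrow> 'v \<Rightarrow> 'v set" where
  "nbhd V E u = {v \<in> V. E u v}"

definition is_walk :: "'v set \<Rightarrow> ('v \<Rightarrow> 'v \<Rightarrow> bool) \<Rightarrow> (nat \<Rightarrow> 'v) \<Rightarrow> nat \<Rightarrow> bool" where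
  "is_walk V E p n \<longleftrightarrow> (\<forall>i\<le>n. p i \<in> V) \<and> (\<forall>i<n. E (p i) (p (Suc i)))"

definition gdist :: "'v set \<Rightarrow> ('v \<Rightarrow> 'v \<Rightarrow> bool) \<Rightarrow> 'v \<Rightarrow> 'v \<Rightarrow> enat" where
  "gdist V E u v =
     (if \<exists>n p. is_walk V E p n \<and> p 0 = u \<and> p n = v
      then enat (LEAST n. \<exists>p. is_walk V E p n \<and> p 0 = u \<and> p n = v) else \<infinity>)"

datatype arrow = Up | Down

text \<open>Configuration: d :: 'v \<Rightarrow> nat, err :: 'v \<Rightarrow> bool (True = 1),
  clocks c i u :: 4 (= Z/4Z), arrows b i u.\<close>

definition well_defined where
  "well_defined V E (d :: 'v \<Rightarrow> nat) (err :: 'v \<Rightarrow> bool) u \<longleftrightarrow>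
     \<not> err u \<and> (\<forall>v\<in>nbhd V E u. \<bar>int (d u) - int (d v)\<bar> \<le> 1)
     \<and> (d u > 0 \<longrightarrow> (\<exists>v\<in>nbhd V E u. d v = d u - 1))"

definition leader_down where
  "leader_down (m::nat) (d :: 'v \<Rightarrow> nat) (b :: nat \<Rightarrow> 'v \<Rightarrow> arrow) u \<longleftrightarrow>
     (d u = 0 \<longrightarrow> (\<forall>i\<in>{1..m-1}. b i u = Down))"

definition bc_up where
  "bc_up V E (d :: 'v \<Rightarrow> nat) (c :: nat \<Rightarrow> 'v \<Rightarrow> 4) b u i \<longleftrightarrow>
     (\<forall>v\<in>nbhd V E u. int (d v) = int (d u) - 1 \<longrightarrow>
        (b i u, b i v, c i v) \<in> {(Up, Up, c i u), (Up, Down, c i u), (Up, Down, c i u + 1),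
                                  (Down, Down, c i u)})"

definition bc_down where
  "bc_down V E (d :: 'v \<Rightarrow> nat) (c :: nat \<Rightarrow> 'v \<Rightarrow> 4) b u i \<longleftrightarrow>
     (\<forall>v\<in>nbhd V E u. d v = d u + 1 \<longrightarrow>
        (b i u, b i v, c i v) \<in> {(Up, Up, c i u), (Down, Up, c i u), (Down, Up, c i u - 1),
                                  (Down, Down, c i u)})"

definition branch_coherence where
  "branch_coherence V E (m::nat) d c b u \<longleftrightarrow>
     d u \<ge> m \<or> (bc_up V E d c b u (d u) \<and>
        (\<forall>i\<in>{d u + 1..m - 1}. bc_up V E d c b u i \<and> bc_down V E d c b u i))"

definition leaders :: "'v set \<Rightarrow> ('v \<Rightarrow> nat) \<Rightarrow> 'v set" where
  "leaders V d = {u \<in> V. d u = 0}"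

definition legitimate where
  "legitimate V E (k::nat) d err c b \<longleftrightarrow>
     (\<forall>u\<in>V. d u < k \<and> well_defined V E d err u \<and> leader_down (k div 2) d b u
        \<and> branch_coherence V E (k div 2) d c b u)
     \<and> (\<forall>s\<in>leaders V d. \<forall>t\<in>leaders V d. s \<noteq> t \<longrightarrow> gdist V E s t \<ge> enat k)"

end

theory Submission
  imports Defs
begin

lemma walk_rev:
  assumes "is_walk V E q n" "\<forall>x y. E x y \<longrightarrow> E y x"
  shows "is_walk V E (\<lambda>i. q (n - i)) n"
  unfolding is_walk_def
proof (intro conjI allI impI)
  fix i assume "i \<le> n" thus "q (n - i) \<in> V" using assms(1) unfolding is_walk_def by auto
next
  fix i assume i: "i < n"
  have "E (q (n - Suc i)) (q (Suc (n - Suc i)))" using assms(1) i unfolding is_walk_def by auto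
  moreover have "Suc (n - Suc i) = n - i" using i by auto
  ultimately show "E (q (n - i)) (q (n - Suc i))" using assms(2) by metis
qed

lemma walk_app:
  assumes "is_walk V E q1 n1" "is_walk V E q2 n2" "q1 n1 = q2 0"
  shows "is_walk V E (\<lambda>i. if i \<le> n1 then q1 i else q2 (i - n1)) (n1 + n2)"
  unfolding is_walk_def
proof (intro conjI allI impI)
  fix i assume "i \<le> n1 + n2" thus "(if i \<le> n1 then q1 i else q2 (i - n1)) \<in> V"
    using assms unfolding is_walk_def by auto
next
  fix i assume i: "i < n1 + n2"
  show "E (if i \<le> n1 then q1 i else q2 (i - n1)) (if Suc i \<le> n1 then q1 (Suc i) else q2 (Suc i - n1))"
  proof (cases "i < n1")
    case True thus ?thesis using assms unfolding is_walk_def by auto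
  next
    case False
    hence "Suc i - n1 = Suc (i - n1)" by auto
    moreover have "i - n1 < n2" using i False by auto
    ultimately show ?thesis using assms False unfolding is_walk_def
      by (cases "i = n1") auto
  qed
qed

lemma walk_prefix: "is_walk V E q n \<Longrightarrow> l \<le> n \<Longrightarrow> is_walk V E q l"
  unfolding is_walk_def by auto

lemma walk_suffix: "is_walk V E q n \<Longrightarrow> l \<le> n \<Longrightarrow> is_walk V E (\<lambda>i. q (i + l)) (n - l)"
  unfolding is_walk_def by auto

lemma gdist_le:
  assumes "is_walk V E q n" "q 0 = x" "q n = y"
  shows "gdist V E x y \<le> enat n"
proof -
  have ex: "\<exists>n p. is_walk V E p n \<and> p 0 = x \<and> p n = y" using assms by blast
  have "(LEAST n. \<exists>p. is_walk V E p n \<and> p 0 = x \<and> p n = y) \<le> n"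
    by (rule Least_le) (use assms in blast)
  thus ?thesis using ex unfolding gdist_def by simp
qed

lemma lip:
  assumes wd: "\<forall>v\<in>V. well_defined V E d err v" and w: "is_walk V E q n"
  shows "d (q n) \<le> d (q 0) + n"
  using w
proof (induction n)
  case 0 thus ?case by simp
next
  case (Suc n)
  hence w': "is_walk V E q n" unfolding is_walk_def by auto
  have e: "E (q n) (q (Suc n))" and v: "q n \<in> V" "q (Suc n) \<in> V"
    using Suc.prems unfolding is_walk_def by auto
  have "\<bar>int (d (q n)) - int (d (q (Suc n)))\<bar> \<le> 1"
    using wd v e unfolding well_defined_def nbhd_def by auto
  thus ?case using Suc.IH[OF w'] by linarith
qed

lemma descend:
  assumes wd: "\<forall>v\<in>V. well_defined V E d err v"
  shows "v \<in> V \<Longrightarrow> \<exists>q. is_walk V E q (d v) \<and> q 0 = v \<and> d (q (d v)) = 0"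
proof (induction "d v" arbitrary: v)
  case 0
  have "is_walk V E (\<lambda>_. v) 0" using 0 unfolding is_walk_def by auto
  thus ?case using 0 by (metis)
next
  case (Suc n)
  then obtain w where w: "w \<in> V" "E v w" "d w = n"
    using wd unfolding well_defined_def nbhd_def by (metis diff_Suc_1 mem_Collect_eq zero_less_Suc)
  then obtain q where q: "is_walk V E q n" "q 0 = w" "d (q n) = 0" using Suc by metis
  define q' where "q' = (\<lambda>i. if i = 0 then v else q (i - 1))"
  have "is_walk V E q' (Suc n)" unfolding is_walk_def
  proof (intro conjI allI impI)
    fix i assume "i \<le> Suc n" thus "q' i \<in> V" using q Suc.prems unfolding q'_def is_walk_def by auto
  next
    fix i assume i: "i < Suc n"
    show "E (q' i) (q' (Suc i))"
    proof (cases i)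
      case 0 thus ?thesis using w q unfolding q'_def by auto
    next
      case (Suc j) thus ?thesis using q i unfolding q'_def is_walk_def by auto
    qed
  qed
  moreover have dv: "d v = Suc n" using Suc.hyps(2) by simp
  moreover have "q' 0 = v" unfolding q'_def by simp
  moreover have "q' (Suc n) = q n" unfolding q'_def by simp
  ultimately show ?case using q(3) by metis
qed

theorem lemma3:
  fixes V :: "'v set" and E :: "'v \<Rightarrow> 'v \<Rightarrow> bool" and k :: nat
    and d :: "'v \<Rightarrow> nat" and err :: "'v \<Rightarrow> bool"
    and c :: "nat \<Rightarrow> 'v \<Rightarrow> 4" and b :: "nat \<Rightarrow> 'v \<Rightarrow> arrow"
    and s u :: 'v and p :: "nat \<Rightarrow> 'v" and L :: nat
  assumes "undirected_graph V E"
    and "k > 2"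
    and "legitimate V E k d err c b"
    and "s \<in> leaders V d"
    and "u \<in> V"
    and "gdist V E u s \<le> enat (k div 2 - 1)"
    and "is_walk V E p L" and "p 0 = s" and "p L = u" and "gdist V E s u = enat L"
  shows "\<forall>i\<in>{d u + 1..k div 2 - 1}. \<exists>a\<le>d u.
           (\<forall>l\<le>a. b i (p l) = Down \<and> c i (p l) = c i s) \<and>
           (\<exists>c'\<in>{c i s - 1, c i s}. \<forall>l\<in>{a+1..d u}. b i (p l) = Up \<and> c i (p l) = c')"
proof -
  define m where "m = k div 2"
  have sym: "\<forall>x y. E x y \<longrightarrow> E y x" using assms(1) unfolding undirected_graph_def by auto
  have leg: "\<forall>u\<in>V. d u < k \<and> well_defined V E d err u \<and> leader_down m d b u
        \<and> branch_coherence V E m d c b u"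
    and sep: "\<forall>s\<in>leaders V d. \<forall>t\<in>leaders V d. s \<noteq> t \<longrightarrow> gdist V E s t \<ge> enat k"
    using assms(3) unfolding legitimate_def m_def by auto
  have wd: "\<forall>v\<in>V. well_defined V E d err v" using leg by auto
  have ds: "d s = 0" "s \<in> V" using assms(4) unfolding leaders_def by auto
  have pV: "\<And>l. l \<le> L \<Longrightarrow> p l \<in> V" using assms(7) unfolding is_walk_def by auto
  have Lmin: "\<And>q n. is_walk V E q n \<Longrightarrow> q 0 = s \<Longrightarrow> q n = u \<Longrightarrow> L \<le> n"
    using gdist_le assms(10) by (metis enat_ord_simps(1))
  have Lm: "L \<le> m - 1"
  proof -
    have "\<exists>n q. is_walk V E q n \<and> q 0 = u \<and> q n = s"
      using assms(6) unfolding gdist_def by (auto split: if_splits)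
    then obtain n q where q: "is_walk V E q n" "q 0 = u" "q n = s" by blast
    hence "gdist V E u s \<le> enat n" using gdist_le by metis
    have "L \<le> n" using Lmin[OF walk_rev[OF q(1) sym]] q by auto
    have "gdist V E u s = enat (LEAST n. \<exists>p. is_walk V E p n \<and> p 0 = u \<and> p n = s)"
      using q unfolding gdist_def by auto
    moreover have "L \<le> (LEAST n. \<exists>p. is_walk V E p n \<and> p 0 = u \<and> p n = s)"
    proof -
      have "\<exists>p. is_walk V E p (LEAST n. \<exists>p. is_walk V E p n \<and> p 0 = u \<and> p n = s) \<and> p 0 = u
          \<and> p (LEAST n. \<exists>p. is_walk V E p n \<and> p 0 = u \<and> p n = s) = s"
        by (rule LeastI[of _ n]) (use q in blast)
      then obtain q' where "is_walk V E q' (LEAST n. \<exists>p. is_walk V E p n \<and> p 0 = u \<and> p n = s)"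
        "q' 0 = u" "q' (LEAST n. \<exists>p. is_walk V E p n \<and> p 0 = u \<and> p n = s) = s" by blast
      thus ?thesis using Lmin[OF walk_rev[OF _ sym]] by auto
    qed
    ultimately show ?thesis using assms(6) m_def by auto
  qed
  have dpl: "d (p l) = l" if l: "l \<le> L" for l
  proof -
    have "d (p l) \<le> d (p 0) + l" using lip[OF wd walk_prefix[OF assms(7) l]] .
    hence le: "d (p l) \<le> l" using ds assms(8) by simp
    obtain q where q: "is_walk V E q (d (p l))" "q 0 = p l" "d (q (d (p l))) = 0"
      using descend[OF wd pV[OF l]] by blast
    have tV: "q (d (p l)) \<in> V" using q(1) unfolding is_walk_def by auto
    have "l \<le> d (p l)"
    proof (cases "q (d (p l)) = s")
      case True
      have w1: "is_walk V E (\<lambda>i. q (d (p l) - i)) (d (p l))" by (rule walk_rev[OF q(1) sym])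
      have w2: "is_walk V E (\<lambda>i. p (i + l)) (L - l)" by (rule walk_suffix[OF assms(7) l])
      have "is_walk V E (\<lambda>i. if i \<le> d (p l) then q (d (p l) - i) else p (i - d (p l) + l))
             (d (p l) + (L - l))"
        using walk_app[OF w1 w2] q by simp
      hence "L \<le> d (p l) + (L - l)"
      proof (rule Lmin)
        show "(if d (p l) + (L - l) \<le> d (p l) then q (d (p l) - (d (p l) + (L - l)))
              else p (d (p l) + (L - l) - d (p l) + l)) = u"
        proof (cases "l = L")
          case True thus ?thesis using q(2) assms(9) by simp
        next
          case False thus ?thesis using l assms(9) by auto
        qed
      next
        show "(if 0 \<le> d (p l) then q (d (p l) - 0) else p (0 - d (p l) + l)) = s"
          using True by simp
      qed
      thus ?thesis using l by linarith
    next
      case False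
      have "is_walk V E (\<lambda>i. if i \<le> l then p i else q (i - l)) (l + d (p l))"
        using walk_app[OF walk_prefix[OF assms(7) l] q(1)] q by simp
      hence "gdist V E s (q (d (p l))) \<le> enat (l + d (p l))"
        apply (rule gdist_le) using assms(8) q(2) by auto
      moreover have "gdist V E s (q (d (p l))) \<ge> enat k"
        using sep ds assms(4) False tV q(3) unfolding leaders_def by auto
      ultimately have "k \<le> l + d (p l)" by (metis enat_ord_simps(1) order_trans)
      thus ?thesis using Lm l m_def by linarith
    qed
    thus ?thesis using le by simp
  qed
  have du: "d u = L" using dpl assms(9) by auto
  show ?thesis unfolding du
  proof
    fix i assume i: "i \<in> {L + 1..k div 2 - 1}"
    have bs: "b i s = Down" using leg ds i unfolding leader_down_def m_def by auto
    have step: "(b i (p (Suc l)), b i (p l), c i (p l)) \<in>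
        {(Up, Up, c i (p (Suc l))), (Up, Down, c i (p (Suc l))), (Up, Down, c i (p (Suc l)) + 1),
         (Down, Down, c i (p (Suc l)))}" if l: "l < L" for l
    proof -
      have bc: "branch_coherence V E m d c b (p (Suc l))" using leg pV l by auto
      have "d (p (Suc l)) = Suc l" using dpl l by auto
      hence "bc_up V E d c b (p (Suc l)) i" using bc i l Lm unfolding branch_coherence_def m_def by auto
      moreover have "p l \<in> nbhd V E (p (Suc l))" using assms(7) sym l pV unfolding nbhd_def is_walk_def by auto
      moreover have "int (d (p l)) = int (d (p (Suc l))) - 1" using dpl l by auto
      ultimately show ?thesis unfolding bc_up_def by blast
    qed
    have "\<forall>l\<le>L. \<exists>a\<le>l.
           (\<forall>j\<le>a. b i (p j) = Down \<and> c i (p j) = c i s) \<and>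
           (\<exists>c'\<in>{c i s - 1, c i s}. \<forall>j\<in>{a+1..l}. b i (p j) = Up \<and> c i (p j) = c')"
    proof (intro allI impI)
      fix l assume "l \<le> L"
      thus "\<exists>a\<le>l.
           (\<forall>j\<le>a. b i (p j) = Down \<and> c i (p j) = c i s) \<and>
           (\<exists>c'\<in>{c i s - 1, c i s}. \<forall>j\<in>{a+1..l}. b i (p j) = Up \<and> c i (p j) = c')"
      proof (induction l)
        case 0 thus ?case using bs assms(8) by (intro exI[of _ 0]) auto
      next
        case (Suc l)
        then obtain a c' where a: "a \<le> l" "\<forall>j\<le>a. b i (p j) = Down \<and> c i (p j) = c i s"
          "c' \<in> {c i s - 1, c i s}" "\<forall>j\<in>{a+1..l}. b i (p j) = Up \<and> c i (p j) = c'" by auto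
        have st: "(b i (p (Suc l)), b i (p l), c i (p l)) \<in>
        {(Up, Up, c i (p (Suc l))), (Up, Down, c i (p (Suc l))), (Up, Down, c i (p (Suc l)) + 1),
         (Down, Down, c i (p (Suc l)))}" using step Suc by auto
        show ?case
        proof (cases "a = l")
          case True
          hence pl: "b i (p l) = Down" "c i (p l) = c i s" using a by auto
          show ?thesis
          proof (cases "b i (p (Suc l))")
            case Up
            have "c i (p (Suc l)) \<in> {c i s - 1, c i s}" using st pl Up by auto
            thus ?thesis using a True Up
              by (intro exI[of _ l]) (auto intro!: bexI[of _ "c i (p (Suc l))"] simp: le_Suc_eq)
          next
            case Down
            hence "c i (p (Suc l)) = c i s" using st pl by auto
            thus ?thesis using a True Down
              by (intro exI[of _ "Suc l"]) (auto simp: le_Suc_eq)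
          qed
        next
          case False
          hence pl: "b i (p l) = Up" "c i (p l) = c'" using a by auto
          hence "b i (p (Suc l)) = Up" "c i (p (Suc l)) = c'" using st by auto
          thus ?thesis using a False
            by (intro exI[of _ a]) (auto intro!: bexI[of _ c'] simp: le_Suc_eq)
        qed
      qed
    qed
    thus "\<exists>a\<le>L. (\<forall>l\<le>a. b i (p l) = Down \<and> c i (p l) = c i s) \<and>
           (\<exists>c'\<in>{c i s - 1, c i s}. \<forall>l\<in>{a+1..L}. b i (p l) = Up \<and> c i (p l) = c')" by auto
  qed
qed

end
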